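(* Let $n\ge 3$ and let $a_k,b_k\in\mathbb{R}$ with $a_k^2+b_k^2\ne 0$ for $k=1,\dots,n$, defining lines $l^k:=\{(x,y):a_kx+b_ky-1=0\}$. Assume $$a_ib_{i^\oplus}-b_ia_{i^\oplus}>0\quad\text{for all } i\in\{1,\dots,n\}$$ (so the intersection points $V_{ii^\oplus}:=l^i\cap l^{i^\oplus}$ exist), and $$-a_k(b_i-b_j)+b_k(a_i-a_j)-(a_ib_j-b_ia_j)<0\quad\text{for all } i\in\{1,\dots,n\},\ j=i^{\oplus},\ k\in\{1,\dots,n\}\setminus\{i,j\}.$$ Let $S:=\{(x,y)\in\mathbb{R}^2: a_kx+b_ky-1\le 0 \text{ for all } k=1,\dots,n\}$. Then the boundary of $S$ is an enclosed, non-degenerate, $n$-sided convex polygon containing the origin $(0,0)$ in its interior; namely, it is the closed polygon formed by the sequence of points $(V_{12},V_{23},\dots,V_{(n-1)n},V_{n1},V_{12})$, whose $n$ vertices $V_{12},\dots,V_{n1}$ are pairwise distinct, with no three cyclically consecutive vertices collinear, and whose edge $[V_{k^\ominus k},V_{kk^\oplus}]$ lies on $l^k$ for each $k$.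
   Context: For $i\in\{1,\dots,n\}$, $i^{\oplus}:=i+1$ if $i\le n-1$ and $n^{\oplus}:=1$; $i^{\ominus}$ is defined by $j=i^{\ominus}$ iff $j^{\oplus}=i$. For lines $l^i,l^j$ with $D_{ij}:=a_ib_j-b_ia_j\ne0$, $l^i\cap l^j$ is the single point $\left(-\frac{b_i-b_j}{D_{ij}},\frac{a_i-a_j}{D_{ij}}\right)$. *)

theory Defs
  imports "HOL-Analysis.Analysis"
begin

definition cnext :: "nat \<Rightarrow> nat \<Rightarrow> nat" where
  "cnext n i = (if i \<le> n - 1 then i + 1 else 1)"

definition cprev :: "nat \<Rightarrow> nat \<Rightarrow> nat" where
  "cprev n i = (if i = 1 then n else i - 1)"

definition line :: "(nat \<Rightarrow> real) \<Rightarrow> (nat \<Rightarrow> real) \<Rightarrow> nat \<Rightarrow> (real \<times> real) set" where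
  "line a b k = {(x, y). a k * x + b k * y - 1 = 0}"

definition Dt :: "(nat \<Rightarrow> real) \<Rightarrow> (nat \<Rightarrow> real) \<Rightarrow> nat \<Rightarrow> nat \<Rightarrow> real" where
  "Dt a b i j = a i * b j - b i * a j"

text \<open>Intersection point of l^i and l^j (when D_ij is nonzero).\<close>
definition isect :: "(nat \<Rightarrow> real) \<Rightarrow> (nat \<Rightarrow> real) \<Rightarrow> nat \<Rightarrow> nat \<Rightarrow> real \<times> real" where
  "isect a b i j = (- (b i - b j) / Dt a b i j, (a i - a j) / Dt a b i j)"

definition region :: "nat \<Rightarrow> (nat \<Rightarrow> real) \<Rightarrow> (nat \<Rightarrow> real) \<Rightarrow> (real \<times> real) set" where
  "region n a b = {(x, y). \<forall>k\<in>{1..n}. a k * x + b k * y - 1 \<le> 0}"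

end

theory Submission
  imports Defs
begin

lemma seg_between:
  fixes xa ya xb yb xp yp :: real
  assumes ab: "\<alpha>^2 + \<beta>^2 \<noteq> 0"
  and A1: "\<alpha>*xa + \<beta>*ya = 1" and B1: "\<alpha>*xb + \<beta>*yb = 1" and p1: "\<alpha>*xp + \<beta>*yp = 1"
  and A2: "\<gamma>*xa + \<delta>*ya - 1 = 0" and B2: "\<gamma>*xb + \<delta>*yb - 1 < 0" and p2: "\<gamma>*xp + \<delta>*yp - 1 \<le> 0"
  and A3: "\<mu>*xa + \<nu>*ya - 1 < 0" and B3: "\<mu>*xb + \<nu>*yb - 1 = 0" and p3: "\<mu>*xp + \<nu>*yp - 1 \<le> 0"
  shows "(xp, yp) \<in> closed_segment (xa, ya) (xb, yb)"
proof -
  define v1 where "v1 = xb - xa"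
  define v2 where "v2 = yb - ya"
  define w1 where "w1 = xp - xa"
  define w2 where "w2 = yp - ya"
  have av: "\<alpha>* v1 + \<beta>* v2 = 0" using A1 B1 unfolding v1_def v2_def by (simp add: algebra_simps)
  have aw: "\<alpha>* w1 + \<beta>* w2 = 0" using A1 p1 unfolding w1_def w2_def by (simp add: algebra_simps)
  have c1: "\<alpha>*(w1* v2 - w2* v1) = 0"
  proof -
    have "\<alpha>*(w1* v2 - w2* v1) = (\<alpha>* w1 + \<beta>* w2)* v2 - (\<alpha>* v1 + \<beta>* v2)* w2" by (simp add: algebra_simps)
    then show ?thesis using av aw by simp
  qed
  have c2: "\<beta>*(w1* v2 - w2* v1) = 0"
  proof -
    have "\<beta>*(w1* v2 - w2* v1) = (\<alpha>* v1 + \<beta>* v2)* w1 - (\<alpha>* w1 + \<beta>* w2)* v1" by (simp add: algebra_simps)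
    then show ?thesis using av aw by simp
  qed
  have cross: "w1* v2 = w2* v1"
  proof -
    have "\<alpha> \<noteq> 0 \<or> \<beta> \<noteq> 0" using ab by auto
    then show ?thesis using c1 c2 by auto
  qed
  have gv: "\<gamma>* v1 + \<delta>* v2 < 0" using A2 B2 unfolding v1_def v2_def by (simp add: algebra_simps)
  have mv: "\<mu>* v1 + \<nu>* v2 > 0" using A3 B3 unfolding v1_def v2_def by (simp add: algebra_simps)
  have vnz: "v1 \<noteq> 0 \<or> v2 \<noteq> 0" using gv by auto
  obtain t where w1t: "w1 = t* v1" and w2t: "w2 = t* v2"
  proof (cases "v1 = 0")
    case True
    then have "v2 \<noteq> 0" using vnz by auto
    moreover have "w1 = 0" using cross True \<open>v2 \<noteq> 0\<close> by simp
    ultimately show ?thesis using True by (intro that[of "w2/v2"]) auto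
  next
    case False
    have "w2 = w1/v1* v2" using cross False by (simp add: field_simps)
    then show ?thesis using False by (intro that[of "w1/v1"]) auto
  qed
  have gp: "\<gamma>*xp + \<delta>*yp - 1 = t*(\<gamma>* v1 + \<delta>* v2)"
  proof -
    have "xp = xa + t* v1" "yp = ya + t* v2" using w1t w2t unfolding w1_def w2_def by auto
    then show ?thesis using A2 by (simp add: algebra_simps)
  qed
  have mp: "\<mu>*xp + \<nu>*yp - 1 = (\<mu>*xa + \<nu>*ya - 1) + t*(\<mu>* v1 + \<nu>* v2)"
  proof -
    have "xp = xa + t* v1" "yp = ya + t* v2" using w1t w2t unfolding w1_def w2_def by auto
    then show ?thesis by (simp add: algebra_simps)
  qed
  have mv2: "\<mu>* v1 + \<nu>* v2 = -(\<mu>*xa + \<nu>*ya - 1)" using B3 unfolding v1_def v2_def by (simp add: algebra_simps)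
  have t0: "t \<ge> 0"
  proof (rule ccontr)
    assume "\<not> t \<ge> 0"
    then have "t*(\<gamma>* v1 + \<delta>* v2) > 0" using gv by (simp add: mult_neg_neg)
    then show False using gp p2 by simp
  qed
  have t1: "t \<le> 1"
  proof (rule ccontr)
    assume "\<not> t \<le> 1"
    have "\<mu>*xp + \<nu>*yp - 1 = (1 - t) * (\<mu>*xa + \<nu>*ya - 1)" using mp mv2 by (simp add: algebra_simps)
    moreover have "(1 - t) * (\<mu>*xa + \<nu>*ya - 1) > 0" using \<open>\<not> t \<le> 1\<close> A3 by (simp add: mult_neg_neg)
    ultimately show False using p3 by simp
  qed
  have "(xp, yp) = (1 - t) *\<^sub>R (xa, ya) + t *\<^sub>R (xb, yb)"
    using w1t w2t unfolding w1_def w2_def v1_def v2_def by (simp add: algebra_simps)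
  then show ?thesis using t0 t1 unfolding in_segment by blast
qed


lemma isect_alg:
  fixes ai bi aj bj :: real
  assumes D: "ai*bj - bi*aj \<noteq> 0"
  shows "ai * (- (bi - bj) / (ai*bj - bi*aj)) + bi * ((ai - aj) / (ai*bj - bi*aj)) - 1 = 0"
    "aj * (- (bi - bj) / (ai*bj - bi*aj)) + bj * ((ai - aj) / (ai*bj - bi*aj)) - 1 = 0"
proof -
  have "ai * (- (bi - bj) / (ai*bj - bi*aj)) + bi * ((ai - aj) / (ai*bj - bi*aj))
      = (ai * (- (bi - bj)) + bi * (ai - aj)) / (ai*bj - bi*aj)"
    by (simp add: add_divide_distrib)
  also have "ai * (- (bi - bj)) + bi * (ai - aj) = ai*bj - bi*aj" by (simp add: algebra_simps)
  finally show "ai * (- (bi - bj) / (ai*bj - bi*aj)) + bi * ((ai - aj) / (ai*bj - bi*aj)) - 1 = 0"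
    using D by simp
  have "aj * (- (bi - bj) / (ai*bj - bi*aj)) + bj * ((ai - aj) / (ai*bj - bi*aj))
      = (aj * (- (bi - bj)) + bj * (ai - aj)) / (ai*bj - bi*aj)"
    by (simp add: add_divide_distrib)
  also have "aj * (- (bi - bj)) + bj * (ai - aj) = ai*bj - bi*aj" by (simp add: algebra_simps)
  finally show "aj * (- (bi - bj) / (ai*bj - bi*aj)) + bj * ((ai - aj) / (ai*bj - bi*aj)) - 1 = 0"
    using D by simp
qed

lemma cyc:
  assumes n3: "n \<ge> 3" and i: "i \<in> {1..n}"
  shows "cnext n i \<in> {1..n}" "cprev n i \<in> {1..n}" "cnext n (cprev n i) = i"
    "cprev n (cnext n i) = i" "cnext n i \<noteq> i" "cprev n i \<noteq> cnext n i"
    "cnext n (cnext n i) \<noteq> i" "cprev n i \<noteq> i"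
proof -
  have i1: "1 \<le> i" "i \<le> n" using i by auto
  show "cnext n i \<in> {1..n}" using i1 n3 unfolding cnext_def by presburger
  show "cprev n i \<in> {1..n}" using i1 n3 unfolding cprev_def by presburger
  show "cnext n (cprev n i) = i" using i1 n3 unfolding cnext_def cprev_def by presburger
  show "cprev n (cnext n i) = i" using i1 n3 unfolding cnext_def cprev_def by presburger
  show "cnext n i \<noteq> i" using i1 n3 unfolding cnext_def by presburger
  show "cprev n i \<noteq> cnext n i" using i1 n3 unfolding cnext_def cprev_def by presburger
  show "cnext n (cnext n i) \<noteq> i" using i1 n3 unfolding cnext_def by presburger
  show "cprev n i \<noteq> i" using i1 n3 unfolding cprev_def by presburger
qed

lemma cn_inj: "n \<ge> 3 \<Longrightarrow> i \<in> {1..n} \<Longrightarrow> j \<in> {1..n} \<Longrightarrow> cnext n i = cnext n j \<Longrightarrow> i = j"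
  unfolding cnext_def by presburger

theorem theorem1:
  fixes n :: nat and a b :: "nat \<Rightarrow> real"
  assumes n3: "n \<ge> 3"
    and nz: "\<forall>k\<in>{1..n}. (a k)\<^sup>2 + (b k)\<^sup>2 \<noteq> 0"
    and Dpos: "\<forall>i\<in>{1..n}. a i * b (cnext n i) - b i * a (cnext n i) > 0"
    and sep: "\<forall>i\<in>{1..n}. \<forall>k\<in>{1..n} - {i, cnext n i}.
               - a k * (b i - b (cnext n i)) + b k * (a i - a (cnext n i))
               - (a i * b (cnext n i) - b i * a (cnext n i)) < 0"
  shows "convex (region n a b) \<and> compact (region n a b)
    \<and> (0, 0) \<in> interior (region n a b)
    \<and> frontier (region n a b) =
        (\<Union>k\<in>{1..n}. closed_segment (isect a b (cprev n k) k) (isect a b k (cnext n k)))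
    \<and> inj_on (\<lambda>i. isect a b i (cnext n i)) {1..n}
    \<and> (\<forall>k\<in>{1..n}. \<not> collinear {isect a b (cprev n k) k, isect a b k (cnext n k),
                                   isect a b (cnext n k) (cnext n (cnext n k))})
    \<and> (\<forall>k\<in>{1..n}. closed_segment (isect a b (cprev n k) k) (isect a b k (cnext n k))
                     \<subseteq> line a b k)"
proof -
  define S where "S = region n a b"
  define F where "F = (\<lambda>k (p::real\<times>real). a k * fst p + b k * snd p - 1)"
  define P where "P = (\<lambda>i. isect a b i (cnext n i))"
  have S_eq: "S = {p. \<forall>k\<in>{1..n}. F k p \<le> 0}"
    by (auto simp: S_def region_def F_def)
  have Fc: "continuous_on UNIV (F k)" for k
    unfolding F_def by (intro continuous_intros)
  have Faff: "F k ((1 - u) *\<^sub>R A + u *\<^sub>R B) = (1 - u) * F k A + u * F k B" for k u A B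
    by (simp add: F_def algebra_simps)
  have L1: "F i (P i) = 0 \<and> F (cnext n i) (P i) = 0" if i: "i \<in> {1..n}" for i
  proof -
    have D: "a i * b (cnext n i) - b i * a (cnext n i) > 0" using Dpos i by auto
    then show ?thesis unfolding F_def P_def isect_def Dt_def
      using isect_alg[of "a i" "b (cnext n i)" "b i" "a (cnext n i)"] by simp
  qed
  have L2: "F k (P i) < 0" if i: "i \<in> {1..n}" and k: "k \<in> {1..n}" "k \<noteq> i" "k \<noteq> cnext n i" for i k
  proof -
    define D where "D = a i * b (cnext n i) - b i * a (cnext n i)"
    have D: "D > 0" using Dpos i by (auto simp: D_def)
    have E: "- a k * (b i - b (cnext n i)) + b k * (a i - a (cnext n i)) - D < 0"
      using sep i k by (auto simp: D_def)
    have "F k (P i) = (- a k * (b i - b (cnext n i)) + b k * (a i - a (cnext n i)) - D) / D"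
      using D unfolding F_def P_def isect_def Dt_def D_def[symmetric] by (simp add: field_simps)
    then show ?thesis using E D by (simp add: divide_neg_pos)
  qed
  have PS: "P i \<in> S" if i: "i \<in> {1..n}" for i
    unfolding S_eq using L1[OF i] L2[OF i] by (auto simp: less_imp_le) (metis less_imp_le order.refl)
  have Faff2: "u + v = 1 \<Longrightarrow> F k (u *\<^sub>R A + v *\<^sub>R B) = u * F k A + v * F k B" for k u v A B
  proof -
    assume uv: "u + v = 1"
    have "F k (u *\<^sub>R A + v *\<^sub>R B) - (u * F k A + v * F k B) = u + v - 1"
      by (simp add: F_def algebra_simps)
    then show ?thesis using uv by simp
  qed
  have S_INT: "S = (\<Inter>k\<in>{1..n}. {p. F k p \<le> 0})" by (auto simp: S_eq)
  have convS: "convex S"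
  proof -
    have "convex {p. F k p \<le> 0}" for k
      unfolding convex_def
    proof (intro ballI allI impI)
      fix x y :: "real \<times> real" and u v :: real
      assume x: "x \<in> {p. F k p \<le> 0}" and y: "y \<in> {p. F k p \<le> 0}" and u: "0 \<le> u" and v: "0 \<le> v" and uv: "u + v = 1"
      have "u * F k x \<le> 0" using x u by (simp add: mult_nonneg_nonpos)
      moreover have "v * F k y \<le> 0" using y v by (simp add: mult_nonneg_nonpos)
      ultimately show "u *\<^sub>R x + v *\<^sub>R y \<in> {p. F k p \<le> 0}" using Faff2[OF uv] by simp
    qed
    then show ?thesis unfolding S_INT by (simp add: convex_INT)
  qed
  have closedS: "closed S"
    unfolding S_INT by (intro closed_INT ballI closed_Collect_le Fc continuous_on_const)
  define U where "U = {p. \<forall>k\<in>{1..n}. F k p < 0}"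
  have openU: "open U"
  proof -
    have "U = (\<Inter>k\<in>{1..n}. {p. F k p < 0})" by (auto simp: U_def)
    then show ?thesis by (simp add: open_INT open_Collect_less[OF Fc continuous_on_const])
  qed
  have US: "U \<subseteq> S" by (auto simp: U_def S_eq less_imp_le)
  have intS: "interior S = U"
  proof
    show "U \<subseteq> interior S" using openU US by (simp add: interior_maximal)
    show "interior S \<subseteq> U"
    proof
      fix p assume p: "p \<in> interior S"
      then obtain e where e: "e > 0" "ball p e \<subseteq> S" by (meson mem_interior)
      have pS: "p \<in> S" using p interior_subset by blast
      show "p \<in> U" unfolding U_def mem_Collect_eq
      proof (rule ballI, rule ccontr)
        fix k assume k: "k \<in> {1..n}" and nl: "\<not> F k p < 0"
        have "F k p \<le> 0" using pS k by (auto simp: S_eq)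
        then have Fp: "F k p = 0" using nl by linarith
        define s where "s = (a k)\<^sup>2 + (b k)\<^sup>2"
        have s: "s > 0" using nz k unfolding s_def
          by (metis add_nonneg_nonneg less_eq_real_def zero_le_power2)
        define c where "c = e / (2 * sqrt s)"
        have c: "c > 0" using e s by (simp add: c_def)
        define q where "q = p + (c * a k, c * b k)"
        have "F k q = F k p + c * s" by (simp add: q_def F_def s_def algebra_simps power2_eq_square)
        then have Fq: "F k q > 0" using Fp c s by simp
        have "dist q p = sqrt ((c * a k)\<^sup>2 + (c * b k)\<^sup>2)"
          by (simp add: q_def dist_norm norm_Pair)
        also have "(c * a k)\<^sup>2 + (c * b k)\<^sup>2 = c\<^sup>2 * s" by (simp add: s_def algebra_simps power2_eq_square)
        also have "sqrt (c\<^sup>2 * s) = c * sqrt s" using c by (simp add: real_sqrt_mult)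
        also have "c * sqrt s = e / 2" using s by (simp add: c_def)
        finally have "dist q p < e" using e by simp
        then have "q \<in> S" using e by (auto simp: dist_commute)
        then have "F k q \<le> 0" using k unfolding S_eq by blast
        then show False using Fq by simp
      qed
    qed
  qed
  have fr: "frontier S = S - U"
    using closedS intS by (simp add: frontier_def closure_closed)
  have seg_line: "F k p = 0" if sg: "p \<in> closed_segment A B" and fab: "F k A = 0" "F k B = 0" for k p A B
  proof -
    obtain u where "p = (1 - u) *\<^sub>R A + u *\<^sub>R B" using sg unfolding in_segment by blast
    then show ?thesis using Faff[of k u A B] fab by simp
  qed
  have Pc: "isect a b (cprev n k) k = P (cprev n k)" if "k \<in> {1..n}" for k
    using cyc[OF n3 that] by (simp add: P_def)
  have Pn: "isect a b (cnext n k) (cnext n (cnext n k)) = P (cnext n k)" for k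
    by (simp add: P_def)
  have frontier_eq: "frontier S = (\<Union>k\<in>{1..n}. closed_segment (P (cprev n k)) (P k))"
  proof
    show "frontier S \<subseteq> (\<Union>k\<in>{1..n}. closed_segment (P (cprev n k)) (P k))"
    proof
      fix p assume "p \<in> frontier S"
      then have pS: "p \<in> S" and pU: "p \<notin> U" using fr by auto
      have "\<exists>k\<in>{1..n}. F k p = 0"
      proof (rule ccontr)
        assume "\<not> (\<exists>k\<in>{1..n}. F k p = 0)"
        then have "\<forall>k\<in>{1..n}. F k p < 0" using pS unfolding S_eq
          by (simp add: order_less_le)
        then show False using pU unfolding U_def by simp
      qed
      then obtain k where k: "k \<in> {1..n}" "F k p = 0" by blast
      note cy = cyc[OF n3 k(1)]
      obtain xa ya where A: "P (cprev n k) = (xa, ya)" by fastforce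
      obtain xb yb where B: "P k = (xb, yb)" by fastforce
      obtain xp yp where pp: "p = (xp, yp)" by fastforce
      have A1: "F k (P (cprev n k)) = 0" using L1[OF cy(2)] cy(3) by simp
      have A2: "F (cprev n k) (P (cprev n k)) = 0" using L1[OF cy(2)] by simp
      have A3: "F (cnext n k) (P (cprev n k)) < 0"
        using L2[OF cy(2) cy(1)] cy by (metis)
      have B1: "F k (P k) = 0" "F (cnext n k) (P k) = 0" using L1[OF k(1)] by auto
      have B2: "F (cprev n k) (P k) < 0" using L2[OF k(1) cy(2)] cy by metis
      have p2: "F (cprev n k) p \<le> 0" "F (cnext n k) p \<le> 0" using pS cy by (auto simp: S_eq)
      have "(xp, yp) \<in> closed_segment (xa, ya) (xb, yb)"
        apply (rule seg_between[where \<alpha>="a k" and \<beta>="b k" and \<gamma>="a (cprev n k)" and \<delta>="b (cprev n k)"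
              and \<mu>="a (cnext n k)" and \<nu>="b (cnext n k)"])
        using nz k A1 A2 A3 B1 B2 p2 k(2) unfolding A B pp F_def by auto
      then have "p \<in> closed_segment (P (cprev n k)) (P k)" using A B pp by simp
      then show "p \<in> (\<Union>k\<in>{1..n}. closed_segment (P (cprev n k)) (P k))"
        using k(1) by blast
    qed
    show "(\<Union>k\<in>{1..n}. closed_segment (P (cprev n k)) (P k)) \<subseteq> frontier S"
    proof
      fix p assume "p \<in> (\<Union>k\<in>{1..n}. closed_segment (P (cprev n k)) (P k))"
      then obtain k where k: "k \<in> {1..n}" and p: "p \<in> closed_segment (P (cprev n k)) (P k)" by auto
      note cy = cyc[OF n3 k]
      have "p \<in> S" using closed_segment_subset[OF PS[OF cy(2)] PS[OF k] convS] p by auto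
      moreover have "F k p = 0"
        using seg_line[OF p] L1[OF cy(2)] cy(3) L1[OF k] by simp
      moreover have "p \<notin> U" using \<open>F k p = 0\<close> k unfolding U_def by force
      ultimately show "p \<in> frontier S" using fr by blast
    qed
  qed
  have boundS: "bounded S"
  proof -
    have "bounded (frontier S)" unfolding frontier_eq by (auto intro: bounded_closed_segment)
    then obtain R where R: "R > 0" "\<forall>x\<in>frontier S. norm x \<le> R" by (auto simp: bounded_pos)
    have conn: "connected (- cball (0::real\<times>real) R)"
      by (rule connected_complement_bounded_convex) auto
    have "norm x \<le> R" if xS: "x \<in> S" for x
    proof (rule ccontr)
      assume nx: "\<not> norm x \<le> R"
      have 1: "1 \<in> {1..n}" using n3 by auto
      define s where "s = (a 1)\<^sup>2 + (b 1)\<^sup>2"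
      have s: "s > 0" using nz 1 unfolding s_def
        by (metis add_nonneg_nonneg less_eq_real_def zero_le_power2)
      define t where "t = 2 / s + (R + 1) / sqrt s"
      define y where "y = (t * a 1, t * b 1)"
      have ts: "t * s \<ge> 2"
      proof -
        have "t * s = 2 + (R + 1) / sqrt s * s" using s by (simp add: t_def algebra_simps)
        moreover have "(R + 1) / sqrt s * s \<ge> 0" using R s by simp
        ultimately show ?thesis by linarith
      qed
      have tq: "t * sqrt s \<ge> R + 1"
      proof -
        have sq: "sqrt s > 0" using s by simp
        have "t * sqrt s = 2 / s * sqrt s + (R + 1) / sqrt s * sqrt s" by (simp add: t_def distrib_right)
        also have "(R + 1) / sqrt s * sqrt s = R + 1" using sq by simp
        finally have "t * sqrt s = 2 / s * sqrt s + (R + 1)" .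
        moreover have "2 / s * sqrt s \<ge> 0" using s by simp
        ultimately show ?thesis by linarith
      qed
      have t0: "t > 0" using R s by (simp add: t_def add_pos_pos)
      have "F 1 y = t * s - 1" by (simp add: y_def F_def s_def algebra_simps power2_eq_square)
      then have "\<not> F 1 y \<le> 0" using ts by simp
      then have "y \<notin> S" using 1 unfolding S_eq by blast
      moreover have "norm y = t * sqrt s"
      proof -
        have "norm y = sqrt ((t * a 1)\<^sup>2 + (t * b 1)\<^sup>2)" by (simp add: y_def norm_Pair)
        also have "(t * a 1)\<^sup>2 + (t * b 1)\<^sup>2 = t\<^sup>2 * s" by (simp add: s_def algebra_simps power2_eq_square)
        also have "sqrt (t\<^sup>2 * s) = t * sqrt s" using t0 by (simp add: real_sqrt_mult)
        finally show ?thesis .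
      qed
      ultimately have "y \<in> - cball 0 R - S" using tq by auto
      moreover have "x \<in> - cball 0 R \<inter> S" using nx xS by auto
      ultimately have "- cball 0 R \<inter> frontier S \<noteq> {}"
        using connected_Int_frontier[OF conn] by blast
      then show False using R by auto
    qed
    then show ?thesis unfolding bounded_iff by blast
  qed
  have injP: "inj_on P {1..n}"
  proof (rule inj_onI)
    fix i j assume i: "i \<in> {1..n}" and j: "j \<in> {1..n}" and eq: "P i = P j"
    show "i = j"
    proof (rule ccontr)
      assume ij: "i \<noteq> j"
      have "F i (P j) = 0" using L1[OF i] eq by simp
      then have ij1: "i = cnext n j" using L2[OF j i] ij by force
      have "F (cnext n i) (P j) = 0" using L1[OF i] eq by simp
      then have "cnext n i = j \<or> cnext n i = cnext n j" using L2[OF j cyc(1)[OF n3 i]] by force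
      then show False using cn_inj[OF n3 i j] ij cyc(7)[OF n3 j] ij1 by auto
    qed
  qed
  have ncol: "\<not> collinear {P (cprev n k), P k, P (cnext n k)}" if k: "k \<in> {1..n}" for k
  proof
    assume col: "collinear {P (cprev n k), P k, P (cnext n k)}"
    note cy = cyc[OF n3 k]
    note cy2 = cyc[OF n3 cy(1)]
    have A1: "F k (P (cprev n k)) = 0" using L1[OF cy(2)] cy(3) by simp
    have A3: "F (cnext n k) (P (cprev n k)) < 0" using L2[OF cy(2) cy(1)] cy by metis
    have B1: "F k (P k) = 0" "F (cnext n k) (P k) = 0" using L1[OF k] by auto
    have C1: "F k (P (cnext n k)) < 0" using L2[OF cy(1) k] cy cy2 by metis
    have C2: "F (cnext n k) (P (cnext n k)) = 0" using L1[OF cy(1)] by simp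
    have "P (cprev n k) \<noteq> P (cnext n k)" using A1 C1 by auto
    then obtain u where u: "P k = u *\<^sub>R P (cprev n k) + (1 - u) *\<^sub>R P (cnext n k)"
      using col unfolding collinear_3_expand by blast
    have e1: "F k (P k) = u * F k (P (cprev n k)) + (1 - u) * F k (P (cnext n k))"
      using Faff2[of u "1 - u" k] u by simp
    have e2: "F (cnext n k) (P k) = u * F (cnext n k) (P (cprev n k)) + (1 - u) * F (cnext n k) (P (cnext n k))"
      using Faff2[of u "1 - u" "cnext n k"] u by simp
    have "u = 1" using e1 A1 B1 C1 by simp
    moreover have "u = 0" using e2 A3 B1 C2 by simp
    ultimately show False by simp
  qed
  have segline: "closed_segment (P (cprev n k)) (P k) \<subseteq> line a b k" if k: "k \<in> {1..n}" for k
  proof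
    fix p assume p: "p \<in> closed_segment (P (cprev n k)) (P k)"
    note cy = cyc[OF n3 k]
    have "F k p = 0" using seg_line[OF p] L1[OF cy(2)] cy(3) L1[OF k] by simp
    then show "p \<in> line a b k" by (cases p) (simp add: line_def F_def)
  qed
  have zero: "(0, 0) \<in> U" by (simp add: U_def F_def)
  have inj2: "inj_on (\<lambda>i. isect a b i (cnext n i)) {1..n}" using injP by (simp add: P_def)
  have Pk: "isect a b k (cnext n k) = P k" for k by (simp add: P_def)
  have UNeq: "(\<Union>k\<in>{1..n}. closed_segment (isect a b (cprev n k) k) (isect a b k (cnext n k)))
      = (\<Union>k\<in>{1..n}. closed_segment (P (cprev n k)) (P k))"
    by (rule SUP_cong) (simp_all add: Pc Pk)
  show ?thesis
    unfolding S_def[symmetric]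
  proof (intro conjI ballI)
    show "convex S" by (rule convS)
    show "compact S" using closedS boundS by (simp add: compact_eq_bounded_closed)
    show "(0, 0) \<in> interior S" using intS zero by simp
    show "frontier S = (\<Union>k\<in>{1..n}. closed_segment (isect a b (cprev n k) k) (isect a b k (cnext n k)))"
      using frontier_eq UNeq by simp
    show "inj_on (\<lambda>i. isect a b i (cnext n i)) {1..n}" by (rule inj2)
    fix k assume k: "k \<in> {1..n}"
    show "\<not> collinear {isect a b (cprev n k) k, isect a b k (cnext n k),
             isect a b (cnext n k) (cnext n (cnext n k))}"
      using ncol[OF k] Pc[OF k] Pk Pn by simp
    show "closed_segment (isect a b (cprev n k) k) (isect a b k (cnext n k)) \<subseteq> line a b k"
      using segline[OF k] Pc[OF k] Pk by simp
  qed
qed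

end
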